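(* Let $m$ be a positive integer, $I=\{m\}$, and $\rho_m=\frac{m}{e}\,(me)^{1/m}$. Then every complex root of $d(I;z)$ lies in the union of the discs $\mathcal D_k=\{z\in\mathbb C\mid |z-k|\le\rho_m\}$ for $k=0,1,\dots,m-1$.
   Context: $d(I;z)$ is the descent polynomial: the unique polynomial whose value at each integer $n>\max(I\cup\{0\})$ is the number of permutations $\pi\in\mathfrak S_n$ with $\{j\mid\pi_j>\pi_{j+1}\}=I$, evaluated at complex $z$. For $I=\{m\}$, $d(I;z)=\binom{z}{m}-1$. *)

theory Defs
  imports "HOL-Analysis.Analysis" "HOL-Combinatorics.Permutations"
    "HOL-Computational_Algebra.Polynomial"
begin

definition descent_set :: "nat \<Rightarrow> (nat \<Rightarrow> nat) \<Rightarrow> nat set" where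
  "descent_set n p = {j \<in> {1..<n}. p j > p (Suc j)}"

definition descent_count :: "nat set \<Rightarrow> nat \<Rightarrow> nat" where
  "descent_count I n = card {p. p permutes {1..n} \<and> descent_set n p = I}"

definition descent_poly :: "nat set \<Rightarrow> complex poly" where
  "descent_poly I = (THE q. \<forall>n::nat. n > Max (insert 0 I) \<longrightarrow>
       poly q (of_nat n) = of_nat (descent_count I n))"

definition rho :: "nat \<Rightarrow> real" where
  "rho m = real m / exp 1 * (real m * exp 1) powr (1 / real m)"

end

theory Submission
  imports Defs
begin


lemma fact_bound:
  assumes "m \<ge> 1"
  shows "fact m \<le> real m ^ (m+1) / exp (real m - 1)"
  using assms
proof (induction m rule: dec_induct)
  case base then show ?case by simp
next
  case (step m)
  have m0: "real m > 0" using step.hyps by simp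
  define q where "q = (real m + 1) / real m"
  have q0: "q > 0" using m0 by (simp add: q_def)
  have "ln (real m / (real m + 1)) \<le> real m / (real m + 1) - 1"
    by (rule ln_le_minus_one) (use m0 in simp)
  also have "\<dots> = - 1 / (real m + 1)" using m0 by (simp add: field_simps)
  finally have "ln (real m / (real m + 1)) \<le> - 1 / (real m + 1)" .
  moreover have "ln (real m / (real m + 1)) = - ln q"
    unfolding q_def using m0 by (simp add: ln_div)
  ultimately have lnq: "1 \<le> (real m + 1) * ln q" using m0 by (simp add: field_simps)
  have "exp 1 \<le> exp ((real m + 1) * ln q)" using lnq by simp
  also have "\<dots> = exp (of_nat (Suc m) * ln q)" by simp
  also have "\<dots> = q ^ Suc m" by (simp only: exp_of_nat_mult exp_ln[OF q0])
  finally have e: "exp 1 * real m ^ Suc m \<le> (real m + 1) ^ Suc m"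
    using m0 by (simp add: q_def power_divide field_simps)
  have "fact (Suc m) = (real m + 1) * fact m" by simp
  also have "\<dots> \<le> (real m + 1) * (real m ^ (m+1) / exp (real m - 1))"
    using step.IH by (intro mult_left_mono) auto
  also have "\<dots> = (real m + 1) * (exp 1 * real m ^ Suc m) / exp (real m)"
    by (simp add: exp_diff field_simps)
  also have "\<dots> \<le> (real m + 1) * (real m + 1) ^ Suc m / exp (real m)"
    using e by (intro divide_right_mono mult_left_mono) auto
  also have "\<dots> = real (Suc m) ^ (Suc m + 1) / exp (real (Suc m) - 1)"
    by (simp add: add.commute)
  finally show ?case .
qed

lemma rho_pow:
  assumes "m > 0"
  shows "rho m ^ m = real m ^ (m+1) / exp (real m - 1)"
proof -
  have pos: "real m * exp 1 > 0" using assms by simp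
  have "((real m * exp 1) powr (1 / real m)) ^ m = real m * exp 1"
    using assms pos by (simp add: powr_realpow[symmetric] powr_powr)
  moreover have "exp (real m) = exp 1 ^ m"
    using exp_of_nat_mult[of m "1::real"] by simp
  ultimately show ?thesis
    unfolding rho_def using assms
    by (simp add: power_mult_distrib power_divide exp_diff field_simps)
qed

lemma fact_le_rho: "m > 0 \<Longrightarrow> fact m \<le> rho m ^ m"
  using fact_bound[of m] rho_pow[of m] by simp

lemma rho_nonneg: "rho m \<ge> 0"
  unfolding rho_def by simp



lemma sorted_block:
  assumes "\<And>j. a \<le> j \<Longrightarrow> Suc j < b \<Longrightarrow> p j < (p (Suc j) :: nat)"
  shows "sorted_wrt (<) (map p [a..<b])"
  unfolding sorted_wrt_iff_nth_Suc_transp[OF transp_on_less]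
  using assms by simp

lemma inc_of_desc:
  assumes p: "p permutes {1..n}" and d: "descent_set n p \<subseteq> {m}"
    and j: "1 \<le> j" "j < n" "j \<noteq> m"
  shows "p j < p (Suc j)"
proof -
  have "p j \<noteq> p (Suc j)" using permutes_inj[OF p] by (metis inj_eq n_not_Suc_n)
  moreover have "\<not> p j > p (Suc j)" using d j unfolding descent_set_def by auto
  ultimately show ?thesis by simp
qed

lemma block1:
  assumes p: "p permutes {1..n}" and d: "descent_set n p \<subseteq> {m}" and mn: "m \<le> n"
  shows "map p [1..<m+1] = sorted_list_of_set (p ` {1..m})"
proof (rule strict_sorted_equal)
  show "sorted_wrt (<) (sorted_list_of_set (p ` {1..m}))" by simp
  show "sorted_wrt (<) (map p [1..<m+1])"
    by (rule sorted_block) (use inc_of_desc[OF p d] mn in auto)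
  show "set (map p [1..<m+1]) = set (sorted_list_of_set (p ` {1..m}))"
    by auto
qed

lemma block2:
  assumes p: "p permutes {1..n}" and d: "descent_set n p \<subseteq> {m}" and mn: "m \<le> n"
  shows "map p [m+1..<n+1] = sorted_list_of_set ({1..n} - p ` {1..m})"
proof (rule strict_sorted_equal)
  show "sorted_wrt (<) (sorted_list_of_set ({1..n} - p ` {1..m}))" by simp
  show "sorted_wrt (<) (map p [m+1..<n+1])"
    by (rule sorted_block) (use inc_of_desc[OF p d] mn in auto)
  have "p ` {m+1..n} = p ` ({1..n} - {1..m})"
    by (rule arg_cong[where f="(`) p"]) auto
  also have "\<dots> = p ` {1..n} - p ` {1..m}"
    by (rule inj_on_image_set_diff[OF permutes_inj_on[OF p]]) (use mn in auto)
  also have "\<dots> = {1..n} - p ` {1..m}" using permutes_image[OF p] by simp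
  finally have e: "p ` {m+1..n} = {1..n} - p ` {1..m}" .
  have "set [m+1..<n+1] = {m+1..n}" by auto
  then show "set (map p [m+1..<n+1]) = set (sorted_list_of_set ({1..n} - p ` {1..m}))"
    using e by simp
qed

lemma count_inj:
  assumes mn: "m < n"
  shows "inj_on (\<lambda>p. p ` {1..m}) {p. p permutes {1..n} \<and> descent_set n p = {m}}"
proof (rule inj_onI)
  fix p p' assume P: "p \<in> {p. p permutes {1..n} \<and> descent_set n p = {m}}"
    and P': "p' \<in> {p. p permutes {1..n} \<and> descent_set n p = {m}}"
    and eq: "p ` {1..m} = p' ` {1..m}"
  from P have p: "p permutes {1..n}" and d: "descent_set n p \<subseteq> {m}" by auto
  from P' have p': "p' permutes {1..n}" and d': "descent_set n p' \<subseteq> {m}" by auto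
  have split: "[1..<n+1] = [1..<m+1] @ [m+1..<n+1]"
    using upt_add_eq_append[of 1 "m+1" "n-m"] mn by simp
  have "map p [1..<n+1] = map p' [1..<n+1]"
    unfolding split using block1[OF p d] block2[OF p d] block1[OF p' d'] block2[OF p' d'] eq mn
    by simp
  then have "\<forall>x\<in>set [1..<n+1]. p x = p' x" by (simp only: map_eq_conv)
  then have "\<forall>x\<in>{1..n}. p x = p' x" by auto
  then show "p = p'"
    using permutes_not_in[OF p] permutes_not_in[OF p'] by (metis ext)
qed

lemma count_sub:
  assumes mn: "m < n" and m0: "m > 0"
  shows "(\<lambda>p. p ` {1..m}) ` {p. p permutes {1..n} \<and> descent_set n p = {m}}
           \<subseteq> {S. S \<subseteq> {1..n} \<and> card S = m} - {{1..m}}"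
proof
  fix S assume "S \<in> (\<lambda>p. p ` {1..m}) ` {p. p permutes {1..n} \<and> descent_set n p = {m}}"
  then obtain p where p: "p permutes {1..n}" and dd: "descent_set n p = {m}" and S: "S = p ` {1..m}"
    by auto
  have d: "descent_set n p \<subseteq> {m}" using dd by simp
  have sub: "S \<subseteq> {1..n}" using S permutes_image[OF p] mn by auto
  have card: "card S = m" using S card_image[OF permutes_inj_on[OF p]] by simp
  have "S \<noteq> {1..m}"
  proof
    assume Sm: "S = {1..m}"
    have "map p [1..<m+1] = [1..<m+1]"
      using block1[OF p d] mn S Sm atLeastLessThanSuc_atLeastAtMost[of 1 m] sorted_list_of_set_range[of 1 "m+1"]
      by simp
    then have "map p [1..<m+1] ! (m-1) = [1..<m+1] ! (m-1)" by simp
    then have pm: "p m = m" using m0 by (simp del: upt_Suc)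
    have "p (Suc m) \<notin> p ` {1..m}"
      using permutes_inj_on[OF p, of UNIV] by (auto simp: inj_on_def) (metis Suc_n_not_le_n)
    moreover have "p (Suc m) \<in> {1..n}"
      using permutes_image[OF p] mn by (metis atLeastAtMost_iff imageI le_add1 plus_1_eq_Suc Suc_leI)
    ultimately have "p (Suc m) > m" using S Sm by auto
    moreover have "m \<in> descent_set n p" using dd by simp
    ultimately show False using pm unfolding descent_set_def by auto
  qed
  then show "S \<in> {S. S \<subseteq> {1..n} \<and> card S = m} - {{1..m}}" using sub card by auto
qed

lemma count_sup:
  assumes mn: "m < n" and m0: "m > 0"
  shows "{S. S \<subseteq> {1..n} \<and> card S = m} - {{1..m}}
     \<subseteq> (\<lambda>p. p ` {1..m}) ` {p. p permutes {1..n} \<and> descent_set n p = {m}}"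
proof
  fix S assume "S \<in> {S. S \<subseteq> {1..n} \<and> card S = m} - {{1..m}}"
  then have Ssub: "S \<subseteq> {1..n}" and cS: "card S = m" and Sne: "S \<noteq> {1..m}" by auto
  have fS: "finite S" using Ssub finite_subset by blast
  define xs where "xs = sorted_list_of_set S"
  define ys where "ys = sorted_list_of_set ({1..n} - S)"
  define L where "L = xs @ ys"
  define p where "p = (\<lambda>j. if j \<in> {1..n} then L ! (j - 1) else j)"
  have lxs: "length xs = m" using cS by (simp add: xs_def)
  have lys: "length ys = n - m"
    using card_Diff_subset[OF fS Ssub] cS by (simp add: ys_def)
  have lL: "length L = n" using lxs lys mn by (simp add: L_def)
  have sxs: "set xs = S" using fS by (simp add: xs_def)
  have sys: "set ys = {1..n} - S" by (simp add: ys_def)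
  have sL: "set L = {1..n}" using sxs sys Ssub by (auto simp: L_def)
  have dL: "distinct L" using sxs sys by (auto simp: L_def xs_def ys_def)
  have srx: "sorted_wrt (<) xs" by (simp add: xs_def)
  have sry: "sorted_wrt (<) ys" by (simp add: ys_def)
  have pj: "p j = L ! (j - 1)" if "j \<in> {1..n}" for j using that by (simp add: p_def)
  have img: "p ` {1..n} = {1..n}"
  proof
    show "p ` {1..n} \<subseteq> {1..n}"
    proof
      fix x assume "x \<in> p ` {1..n}"
      then obtain j where j: "j \<in> {1..n}" "x = p j" by auto
      then have "x = L ! (j-1)" using pj by simp
      moreover have "j - 1 < length L" using j lL by auto
      ultimately show "x \<in> {1..n}" using sL nth_mem by metis
    qed
    show "{1..n} \<subseteq> p ` {1..n}"
    proof
      fix x assume "x \<in> {1..n}"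
      then have "x \<in> set L" using sL by simp
      then obtain i where i: "i < length L" "x = L ! i" by (metis in_set_conv_nth)
      have "Suc i \<in> {1..n}" using i lL by auto
      moreover have "p (Suc i) = x" using pj[OF \<open>Suc i \<in> {1..n}\<close>] i by simp
      ultimately show "x \<in> p ` {1..n}" by (metis imageI)
    qed
  qed
  have inj: "inj_on p {1..n}"
  proof (rule inj_onI)
    fix a b assume a: "a \<in> {1..n}" and b: "b \<in> {1..n}" and e: "p a = p b"
    then have "L ! (a-1) = L ! (b-1)" using pj by simp
    then have "a - 1 = b - 1" using nth_eq_iff_index_eq[OF dL] a b lL by auto
    then show "a = b" using a b by auto
  qed
  have perm: "p permutes {1..n}"
  proof (rule bij_imp_permutes)
    show "bij_betw p {1..n} {1..n}" using inj img by (simp add: bij_betw_def)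
    show "p x = x" if "x \<notin> {1..n}" for x using that by (auto simp: p_def)
  qed
  have pS: "p ` {1..m} = S"
  proof
    show "p ` {1..m} \<subseteq> S"
    proof
      fix x assume "x \<in> p ` {1..m}"
      then obtain j where j: "j \<in> {1..m}" "x = p j" by auto
      then have "x = xs ! (j-1)" using pj[of j] mn lxs by (auto simp: L_def nth_append)
      moreover have "j - 1 < length xs" using j lxs by auto
      ultimately show "x \<in> S" using sxs nth_mem by metis
    qed
    show "S \<subseteq> p ` {1..m}"
    proof
      fix x assume "x \<in> S"
      then have "x \<in> set xs" using sxs by simp
      then obtain i where i: "i < length xs" "x = xs ! i" by (metis in_set_conv_nth)
      have "Suc i \<in> {1..m}" using i lxs by auto
      moreover have "p (Suc i) = x" using pj[of "Suc i"] i lxs mn by (auto simp: L_def nth_append)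
      ultimately show "x \<in> p ` {1..m}" by (metis imageI)
    qed
  qed
  have desc: "descent_set n p = {m}"
  proof (rule set_eqI)
    fix j
    show "j \<in> descent_set n p \<longleftrightarrow> j \<in> {m}"
    proof (cases "j \<in> {1..<n}")
      case False
      then show ?thesis using m0 mn by (auto simp: descent_set_def)
    next
      case True
      then have j1: "j \<in> {1..n}" and j2: "Suc j \<in> {1..n}" by auto
      have pj1: "p j = L ! (j-1)" and pj2: "p (Suc j) = L ! j" using pj[OF j1] pj[OF j2] by auto
      consider "j < m" | "j = m" | "j > m" by linarith
      then show ?thesis
      proof cases
        case 1
        then have "p j = xs ! (j-1)" "p (Suc j) = xs ! j" using pj1 pj2 lxs by (auto simp: L_def nth_append)
        moreover have "xs ! (j-1) < xs ! j"
          using sorted_wrt_nth_less[OF srx, of "j-1" j] 1 True lxs by auto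
        ultimately show ?thesis using 1 by (auto simp: descent_set_def)
      next
        case 3
        then have "p j = ys ! (j-1-m)" "p (Suc j) = ys ! (j-m)" using pj1 pj2 lxs by (auto simp: L_def nth_append)
        moreover have "ys ! (j-1-m) < ys ! (j-m)"
          using sorted_wrt_nth_less[OF sry, of "j-1-m" "j-m"] 3 True lys by auto
        ultimately show ?thesis using 3 by (auto simp: descent_set_def)
      next
        case 2
        have a: "p m = xs ! (m-1)" "p (Suc m) = ys ! 0" using pj1 pj2 lxs 2 m0 by (auto simp: L_def nth_append)
        have "xs ! (m-1) > ys ! 0"
        proof (rule ccontr)
          assume "\<not> xs ! (m-1) > ys ! 0"
          then have le: "xs ! (m-1) \<le> ys ! 0" by simp
          have "\<forall>x\<in>set xs. \<forall>y\<in>set ys. x < y"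
          proof (intro ballI)
            fix x y assume x: "x \<in> set xs" and y: "y \<in> set ys"
            obtain i where i: "i < m" "x = xs ! i" using x lxs by (metis in_set_conv_nth)
            obtain k where k: "k < n - m" "y = ys ! k" using y lys by (metis in_set_conv_nth)
            have "x \<le> xs ! (m-1)"
              using sorted_wrt_nth_less[OF srx, of i "m-1"] i lxs
              by (cases "i = m - 1") (auto, linarith)
            moreover have "ys ! 0 \<le> y"
              using sorted_wrt_nth_less[OF sry, of 0 k] k lys
              by (cases "k = 0") auto
            moreover have "x \<noteq> y" using x y sxs sys by auto
            ultimately show "x < y" using le by linarith
          qed
          then have "sorted_wrt (<) L" using srx sry by (simp add: L_def sorted_wrt_append)
          moreover have "sorted_wrt (<) [1..<n+1]" by (rule sorted_wrt_upt)
          moreover have "set L = set [1..<n+1]" using sL atLeastLessThanSuc_atLeastAtMost[of 1 n] by (simp only: set_upt) simp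
          ultimately have "L = [1..<n+1]"
            using strict_sorted_equal[of "[1..<n+1]" L] by blast
          moreover have "xs = take m L" by (simp add: L_def lxs[symmetric])
          ultimately have "xs = take m [1..<n+1]" by simp
          also have "\<dots> = [1..<m+1]" using mn by (simp del: upt_Suc add: take_upt)
          finally have "S = set [1..<m+1]" using sxs by simp
          then have "S = {1..m}" using atLeastLessThanSuc_atLeastAtMost[of 1 m] by (simp only: set_upt) simp
          then show False using Sne by simp
        qed
        then show ?thesis using a 2 True by (auto simp: descent_set_def)
      qed
    qed
  qed
  show "S \<in> (\<lambda>p. p ` {1..m}) ` {p. p permutes {1..n} \<and> descent_set n p = {m}}"
    using perm desc pS by blast
qed


lemma descent_count_single:
  assumes mn: "m < n" and m0: "m > 0"
  shows "descent_count {m} n = (n choose m) - 1"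
proof -
  let ?P = "{p. p permutes {1..n} \<and> descent_set n p = {m}}"
  let ?T = "{S. S \<subseteq> {1..n} \<and> card S = m} - {{1..m}}"
  have eq: "(\<lambda>p. p ` {1..m}) ` ?P = ?T"
    using count_sub[OF mn m0] count_sup[OF mn m0] by (rule equalityI)
  have "descent_count {m} n = card ?P" by (simp add: descent_count_def)
  also have "\<dots> = card ((\<lambda>p. p ` {1..m}) ` ?P)" using card_image[OF count_inj[OF mn]] by simp
  also have "\<dots> = card ?T" using eq by simp
  also have "\<dots> = card {S. S \<subseteq> {1..n} \<and> card S = m} - 1"
  proof (rule card_Diff_singleton)
    show "{1..m} \<in> {S. S \<subseteq> {1..n} \<and> card S = m}" using mn by auto
  qed
  also have "\<dots> = (n choose m) - 1" using n_subsets[of "{1..n}" m] by simp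
  finally show ?thesis .
qed

definition qpoly :: "nat \<Rightarrow> complex poly" where
  "qpoly m = smult (1 / fact m) (\<Prod>k<m. [:- of_nat k, 1:]) - 1"

lemma poly_qpoly: "poly (qpoly m) z = (\<Prod>k<m. z - of_nat k) / fact m - 1"
  by (simp add: qpoly_def poly_prod)

lemma poly_qpoly_nat: "poly (qpoly m) (of_nat n) = of_nat (n choose m) - 1"
  by (simp add: poly_qpoly binomial_gbinomial gbinomial_prod_rev lessThan_atLeast0)

lemma descent_poly_single:
  assumes m0: "m > 0"
  shows "descent_poly {m} = qpoly m"
proof -
  have Mx: "Max (insert 0 {m}) = m" by simp
  have P: "\<forall>n::nat. n > m \<longrightarrow> poly (qpoly m) (of_nat n) = of_nat (descent_count {m} n)"
  proof (intro allI impI)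
    fix n :: nat assume mn: "n > m"
    have "n choose m \<ge> 1" using mn by (simp add: Suc_leI zero_less_binomial)
    then show "poly (qpoly m) (of_nat n) = of_nat (descent_count {m} n)"
      using descent_count_single[OF mn m0] poly_qpoly_nat[of m n] by (simp add: of_nat_diff)
  qed
  have U: "q = qpoly m" if Q: "\<forall>n::nat. n > m \<longrightarrow> poly q (of_nat n) = of_nat (descent_count {m} n)" for q
  proof (rule ccontr)
    assume "q \<noteq> qpoly m"
    then have "q - qpoly m \<noteq> 0" by simp
    then have fin: "finite {x. poly (q - qpoly m) x = 0}" by (rule poly_roots_finite)
    have "of_nat ` {m<..} \<subseteq> {x. poly (q - qpoly m) x = 0}"
    proof
      fix x assume "x \<in> (of_nat ` {m<..} :: complex set)"
      then obtain n where n: "n > m" "x = of_nat n" by auto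
      have "poly q x = of_nat (descent_count {m} n)" using Q n by simp
      moreover have "poly (qpoly m) x = of_nat (descent_count {m} n)" using P n by simp
      ultimately show "x \<in> {x. poly (q - qpoly m) x = 0}" by simp
    qed
    then have "finite (of_nat ` {m<..} :: complex set)" using fin by (rule finite_subset)
    moreover have "inj_on (of_nat :: nat \<Rightarrow> complex) {m<..}" by (simp add: inj_on_def)
    ultimately have "finite {m<..}" by (rule finite_imageD)
    then show False using infinite_Ioi[of m] by simp
  qed
  show ?thesis unfolding descent_poly_def Mx
  proof (rule the_equality)
    show "\<forall>n::nat. n > m \<longrightarrow> poly (qpoly m) (of_nat n) = of_nat (descent_count {m} n)" by (rule P)
  next
    fix q :: "complex poly" assume "\<forall>n::nat. m < n \<longrightarrow> poly q (of_nat n) = of_nat (descent_count {m} n)"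
    then show "q = qpoly m" by (rule U)
  qed
qed

theorem theorem4p8:
  fixes m :: nat and z :: complex
  assumes "m > 0"
    and "poly (descent_poly {m}) z = 0"
  shows "\<exists>k<m. cmod (z - of_nat k) \<le> rho m"
proof (rule ccontr)
  assume H: "\<not> (\<exists>k<m. cmod (z - of_nat k) \<le> rho m)"
  have "poly (qpoly m) z = 0" using assms descent_poly_single by simp
  then have pr: "(\<Prod>k<m. z - of_nat k) = fact m" by (simp add: poly_qpoly)
  have "(\<Prod>k<m. cmod (z - of_nat k)) = fact m"
    using arg_cong[OF pr, of norm] by (simp add: prod_norm norm_fact)
  moreover have "rho m ^ m < (\<Prod>k<m. cmod (z - of_nat k))"
  proof -
    have "(\<Prod>k<m. rho m) < (\<Prod>k<m. cmod (z - of_nat k))"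
    proof (rule prod_mono_strict[where i=0])
      have H': "\<And>k. k < m \<Longrightarrow> rho m < cmod (z - of_nat k)" using H by (meson not_le)
      show "0 \<in> {..<m}" using assms(1) by simp
      show "rho m < cmod (z - of_nat 0)" using H'[of 0] assms(1) by simp
      show "finite {..<m}" by simp
      show "0 \<le> rho m \<and> rho m \<le> cmod (z - of_nat i)" if "i \<in> {..<m}" for i
        using H'[of i] that rho_nonneg[of m] by simp
      show "0 < cmod (z - of_nat i)" if "i \<in> {..<m}" for i
      proof -
        have "rho m < cmod (z - of_nat i)" using H'[of i] that by simp
        then show ?thesis using rho_nonneg[of m] by linarith
      qed
    qed
    then show ?thesis by simp
  qed
  ultimately show False using fact_le_rho[OF assms(1)] by simp
qed

end
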